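(* Let $\mathcal{C}=\{C_1,\dots,C_k\}\subset\mathbb{P}^2_{\mathbb{C}}$ be a $d$-arrangement of $k\geq 3$ curves with $t_k=0$. Then the Levi graph $G$ of $\mathcal{C}$ contains an induced cycle of length $6$.
   Context: A $d$-arrangement is an arrangement $\mathcal{C}=\{C_1,\dots,C_k\}$ of $k\geq 3$ smooth plane curves all of the same degree $d\geq 1$ such that the singular locus $\mathrm{Sing}(\mathcal{C})$ consists only of ordinary intersection points (locally like intersections of lines). For $r\geq 2$, $t_r$ denotes the number of points of $\mathrm{Sing}(\mathcal{C})$ lying on exactly $r$ curves of $\mathcal{C}$; thus $t_k=0$ means no point lies on all $k$ curves. The Levi graph of $\mathcal{C}$ is the bipartite graph with one vertex for each point $p\in\mathrm{Sing}(\mathcal{C})$, one vertex for each curve $C_j$, and an edge between the vertex of $p$ and the vertex of $C_j$ iff $p\in C_j$. *)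

theory Defs
  imports Complex_Main
begin

type_synonym pt3 = "complex \<times> complex \<times> complex"

definition smult3 :: "complex \<Rightarrow> pt3 \<Rightarrow> pt3" where
  "smult3 a = (\<lambda>(x,y,z). (a*x, a*y, a*z))"

definition proj :: "pt3 \<Rightarrow> pt3 set" where
  "proj v = {smult3 a v | a. a \<noteq> 0}"

definition P2 :: "pt3 set set" where
  "P2 = {proj v | v. v \<noteq> (0,0,0)}"

text \<open>A homogeneous polynomial of degree d in x,y,z is given by its coefficient function c:
  c i j is the coefficient of x^i y^j z^(d-i-j) (only i+j \<le> d matters).\<close>

definition hpoly :: "nat \<Rightarrow> (nat \<Rightarrow> nat \<Rightarrow> complex) \<Rightarrow> pt3 \<Rightarrow> complex" where
  "hpoly d c = (\<lambda>(x,y,z). \<Sum>i\<le>d. \<Sum>j\<le>d-i. c i j * x^i * y^j * z^(d-i-j))"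

definition hpoly_dx :: "nat \<Rightarrow> (nat \<Rightarrow> nat \<Rightarrow> complex) \<Rightarrow> pt3 \<Rightarrow> complex" where
  "hpoly_dx d c = (\<lambda>(x,y,z). \<Sum>i\<le>d. \<Sum>j\<le>d-i. c i j * of_nat i * x^(i-1) * y^j * z^(d-i-j))"

definition hpoly_dy :: "nat \<Rightarrow> (nat \<Rightarrow> nat \<Rightarrow> complex) \<Rightarrow> pt3 \<Rightarrow> complex" where
  "hpoly_dy d c = (\<lambda>(x,y,z). \<Sum>i\<le>d. \<Sum>j\<le>d-i. c i j * of_nat j * x^i * y^(j-1) * z^(d-i-j))"

definition hpoly_dz :: "nat \<Rightarrow> (nat \<Rightarrow> nat \<Rightarrow> complex) \<Rightarrow> pt3 \<Rightarrow> complex" where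
  "hpoly_dz d c = (\<lambda>(x,y,z). \<Sum>i\<le>d. \<Sum>j\<le>d-i.
       c i j * of_nat (d-i-j) * x^i * y^j * z^(d-i-j-1))"

definition hgrad :: "nat \<Rightarrow> (nat \<Rightarrow> nat \<Rightarrow> complex) \<Rightarrow> pt3 \<Rightarrow> pt3" where
  "hgrad d c v = (hpoly_dx d c v, hpoly_dy d c v, hpoly_dz d c v)"

definition cross3 :: "pt3 \<Rightarrow> pt3 \<Rightarrow> pt3" where
  "cross3 = (\<lambda>(a1,a2,a3) (b1,b2,b3). (a2*b3 - a3*b2, a3*b1 - a1*b3, a1*b2 - a2*b1))"

definition curve :: "nat \<Rightarrow> (nat \<Rightarrow> nat \<Rightarrow> complex) \<Rightarrow> pt3 set set" where
  "curve d c = {proj v | v. v \<noteq> (0,0,0) \<and> hpoly d c v = 0}"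

definition smooth_curve :: "nat \<Rightarrow> (nat \<Rightarrow> nat \<Rightarrow> complex) \<Rightarrow> bool" where
  "smooth_curve d c \<longleftrightarrow> (\<exists>i j. i + j \<le> d \<and> c i j \<noteq> 0) \<and>
     (\<forall>v. v \<noteq> (0,0,0) \<and> hpoly d c v = 0 \<longrightarrow> hgrad d c v \<noteq> (0,0,0))"

definition sing_locus :: "nat \<Rightarrow> nat \<Rightarrow> (nat \<Rightarrow> nat \<Rightarrow> nat \<Rightarrow> complex) \<Rightarrow> pt3 set set" where
  "sing_locus d k cs = {P. \<exists>i j. i < k \<and> j < k \<and> i \<noteq> j \<and> P \<in> curve d (cs i) \<and> P \<in> curve d (cs j)}"

text \<open>A d-arrangement of k curves C_i = V(cs i), i < k: distinct smooth curves of degree d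
  whose singular points are ordinary (the curves through such a point have pairwise
  distinct tangent lines there).\<close>

definition d_arrangement :: "nat \<Rightarrow> nat \<Rightarrow> (nat \<Rightarrow> nat \<Rightarrow> nat \<Rightarrow> complex) \<Rightarrow> bool" where
  "d_arrangement d k cs \<longleftrightarrow> d \<ge> 1 \<and> k \<ge> 3 \<and>
     (\<forall>i<k. smooth_curve d (cs i)) \<and>
     (\<forall>i<k. \<forall>j<k. i \<noteq> j \<longrightarrow> curve d (cs i) \<noteq> curve d (cs j)) \<and>
     (\<forall>i<k. \<forall>j<k. \<forall>v. i \<noteq> j \<and> v \<noteq> (0,0,0) \<and> hpoly d (cs i) v = 0 \<and> hpoly d (cs j) v = 0
        \<longrightarrow> cross3 (hgrad d (cs i) v) (hgrad d (cs j) v) \<noteq> (0,0,0))"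

definition t_count :: "nat \<Rightarrow> nat \<Rightarrow> (nat \<Rightarrow> nat \<Rightarrow> nat \<Rightarrow> complex) \<Rightarrow> nat \<Rightarrow> nat" where
  "t_count d k cs r = card {P \<in> sing_locus d k cs. card {i. i < k \<and> P \<in> curve d (cs i)} = r}"

definition levi_vertices :: "nat \<Rightarrow> nat \<Rightarrow> (nat \<Rightarrow> nat \<Rightarrow> nat \<Rightarrow> complex) \<Rightarrow> (pt3 set + nat) set" where
  "levi_vertices d k cs = Inl ` sing_locus d k cs \<union> Inr ` {..<k}"

fun levi_adj :: "nat \<Rightarrow> nat \<Rightarrow> (nat \<Rightarrow> nat \<Rightarrow> nat \<Rightarrow> complex) \<Rightarrow> pt3 set + nat \<Rightarrow> pt3 set + nat \<Rightarrow> bool" where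
  "levi_adj d k cs (Inl P) (Inr i) \<longleftrightarrow> P \<in> sing_locus d k cs \<and> i < k \<and> P \<in> curve d (cs i)"
| "levi_adj d k cs (Inr i) (Inl P) \<longleftrightarrow> P \<in> sing_locus d k cs \<and> i < k \<and> P \<in> curve d (cs i)"
| "levi_adj d k cs _ _ \<longleftrightarrow> False"

definition induced_cycle :: "'v set \<Rightarrow> ('v \<Rightarrow> 'v \<Rightarrow> bool) \<Rightarrow> 'v list \<Rightarrow> bool" where
  "induced_cycle V E cyc \<longleftrightarrow> length cyc \<ge> 3 \<and> distinct cyc \<and> set cyc \<subseteq> V \<and>
     (\<forall>i<length cyc. \<forall>j<length cyc.
        E (cyc ! i) (cyc ! j) \<longleftrightarrow> (j = Suc i mod length cyc \<or> i = Suc j mod length cyc))"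

end

theory Submission
  imports Defs "HOL-Analysis.Analysis" "Subresultants.Subresultant_Gcd"
    "HOL-Computational_Algebra.Field_as_Ring" "HOL-Computational_Algebra.Fundamental_Theorem_Algebra"
begin

definition dot3 :: "pt3 \<Rightarrow> pt3 \<Rightarrow> complex" where
  "dot3 = (\<lambda>(a1,a2,a3) (b1,b2,b3). a1*b1 + a2*b2 + a3*b3)"

lemma dot3_simp[simp]: "dot3 (a1,a2,a3) (b1,b2,b3) = a1*b1 + a2*b2 + a3*b3"
  by (simp add: dot3_def)

lemma hpoly_alt: "hpoly d c v = (\<Sum>i\<le>d. \<Sum>j\<le>d-i. c i j * fst v^i * fst (snd v)^j * snd (snd v)^(d-i-j))"
  by (cases v) (auto simp: hpoly_def)

lemma smult_term:
  fixes a x y z :: complex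
  assumes "i + j \<le> d"
  shows "cc * (a * x) ^ i * (a * y) ^ j * (a * z) ^ (d - i - j) = a ^ d * (cc * x ^ i * y ^ j * z ^ (d - i - j))"
proof -
  have "a^d = a^i * a^j * a^(d-i-j)" using assms
    by (simp add: power_add[symmetric])
  then show ?thesis by (simp add: power_mult_distrib)
qed

lemma hpoly_smult: "hpoly d c (smult3 a v) = a^d * hpoly d c v"
proof -
  obtain x y z where v: "v = (x,y,z)" by (cases v) auto
  have "hpoly d c (smult3 a v) = (\<Sum>i\<le>d. \<Sum>j\<le>d-i. c i j * (a*x)^i * (a*y)^j * (a*z)^(d-i-j))"
    unfolding v smult3_def hpoly_def by simp
  also have "\<dots> = (\<Sum>i\<le>d. \<Sum>j\<le>d-i. a^d * (c i j * x^i * y^j * z^(d-i-j)))"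
    apply (rule sum.cong[OF refl])
    apply (rule sum.cong[OF refl])
    apply (rule smult_term)
    by auto
  also have "\<dots> = a^d * hpoly d c v" unfolding v hpoly_def by (simp add: sum_distrib_left)
  finally show ?thesis .
qed

lemma euler_term:
  fixes c x y z :: complex
  shows "c * of_nat i * x^(i-1) * y^j * z^m * x + c * of_nat j * x^i * y^(j-1) * z^m * y
     + c * of_nat m * x^i * y^j * z^(m-1) * z = of_nat (i + j + m) * (c*x^i*y^j*z^m)"
proof -
  have e1: "of_nat i * x^(i-1) * x = of_nat i * (x^i::complex)" by (cases i) auto
  have e2: "of_nat j * y^(j-1) * y = of_nat j * (y^j::complex)" by (cases j) auto
  have e3: "of_nat m * z^(m-1) * z = of_nat m * (z^m::complex)" by (cases m) auto
  have "c * of_nat i * x^(i-1) * y^j * z^m * x + c * of_nat j * x^i * y^(j-1) * z^m * y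
     + c * of_nat m * x^i * y^j * z^(m-1) * z
     = c * y^j * z^m * (of_nat i * x^(i-1) * x) + c * x^i * z^m * (of_nat j * y^(j-1) * y)
        + c * x^i * y^j * (of_nat m * z^(m-1) * z)" by (simp only: ac_simps)
  also have "\<dots> = (of_nat i + of_nat j + of_nat m) * (c*x^i*y^j*z^m)"
    unfolding e1 e2 e3 by (simp add: algebra_simps)
  finally show ?thesis by simp
qed

lemma euler: "dot3 (hgrad d c v) v = of_nat d * hpoly d c v"
proof -
  obtain x y z where v: "v = (x,y,z)" by (cases v) auto
  have "dot3 (hgrad d c v) v = (\<Sum>i\<le>d. \<Sum>j\<le>d-i. c i j * of_nat i * x^(i-1) * y^j * z^(d-i-j) * x)
     + (\<Sum>i\<le>d. \<Sum>j\<le>d-i. c i j * of_nat j * x^i * y^(j-1) * z^(d-i-j) * y)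
     + (\<Sum>i\<le>d. \<Sum>j\<le>d-i. c i j * of_nat (d-i-j) * x^i * y^j * z^(d-i-j-1) * z)"
    unfolding v hgrad_def hpoly_dx_def hpoly_dy_def hpoly_dz_def
    by (simp only: prod.case dot3_simp sum_distrib_right)
  also have "\<dots> = (\<Sum>i\<le>d. \<Sum>j\<le>d-i. c i j * of_nat i * x^(i-1) * y^j * z^(d-i-j) * x
       + c i j * of_nat j * x^i * y^(j-1) * z^(d-i-j) * y
       + c i j * of_nat (d-i-j) * x^i * y^j * z^(d-i-j-1) * z)"
    by (simp only: sum.distrib)
  also have "\<dots> = (\<Sum>i\<le>d. \<Sum>j\<le>d-i. of_nat d * (c i j * x^i * y^j * z^(d-i-j)))"
    apply (rule sum.cong[OF refl])
    apply (rule sum.cong[OF refl])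
    subgoal for i j
      using euler_term[where c="c i j" and i=i and j=j and m="d-i-j" and x=x and y=y and z=z] by simp
    done
  also have "\<dots> = of_nat d * hpoly d c v" unfolding v hpoly_def by (simp add: sum_distrib_left)
  finally show ?thesis .
qed

lemma term_deriv: fixes v :: pt3 and cc :: complex shows "((\<lambda>w. cc * fst w^i * fst (snd w)^j * snd (snd w)^m) has_derivative
     (\<lambda>h. cc * (of_nat i * fst h * fst v^(i-1)) * fst (snd v)^j * snd (snd v)^m
       + cc * fst v^i * (of_nat j * fst (snd h) * fst (snd v)^(j-1)) * snd (snd v)^m
       + cc * fst v^i * fst (snd v)^j * (of_nat m * snd (snd h) * snd (snd v)^(m-1)))) (at v)"
  apply (rule has_derivative_eq_rhs)
   apply (rule derivative_intros)+
  apply (rule ext)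
  apply (simp add: algebra_simps)
  done

lemma hpoly_deriv: "(hpoly d c has_derivative (\<lambda>h::pt3. dot3 (hgrad d c v) h)) (at v)"
proof -
  obtain x y z where v: "v = (x,y,z)" by (cases v) auto
  let ?D = "\<lambda>h::pt3. \<Sum>i\<le>d. \<Sum>j\<le>d-i. c i j * (of_nat i * fst h * fst v^(i-1)) * fst (snd v)^j * snd (snd v)^(d-i-j)
       + c i j * fst v^i * (of_nat j * fst (snd h) * fst (snd v)^(j-1)) * snd (snd v)^(d-i-j)
       + c i j * fst v^i * fst (snd v)^j * (of_nat (d-i-j) * snd (snd h) * snd (snd v)^(d-i-j-1))"
  have 1: "((\<lambda>w. \<Sum>i\<le>d. \<Sum>j\<le>d-i. c i j * fst w^i * fst (snd w)^j * snd (snd w)^(d-i-j)) has_derivative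
     ?D) (at v)"
    apply (rule has_derivative_sum)
    apply (rule has_derivative_sum)
    apply (rule term_deriv)
    done
  have 2: "(\<lambda>w. \<Sum>i\<le>d. \<Sum>j\<le>d-i. c i j * fst w^i * fst (snd w)^j * snd (snd w)^(d-i-j)) = hpoly d c"
    by (rule ext) (simp add: hpoly_alt)
  have 3: "?D h = dot3 (hgrad d c v) h" for h :: pt3
  proof -
    obtain h1 h2 h3 :: complex where h: "h = (h1,h2,h3)" by (cases h) auto
    have "dot3 (hgrad d c v) h = (\<Sum>i\<le>d. \<Sum>j\<le>d-i. c i j * of_nat i * x^(i-1) * y^j * z^(d-i-j) * h1)
     + (\<Sum>i\<le>d. \<Sum>j\<le>d-i. c i j * of_nat j * x^i * y^(j-1) * z^(d-i-j) * h2)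
     + (\<Sum>i\<le>d. \<Sum>j\<le>d-i. c i j * of_nat (d-i-j) * x^i * y^j * z^(d-i-j-1) * h3)"
      unfolding v h hgrad_def hpoly_dx_def hpoly_dy_def hpoly_dz_def
      by (simp only: prod.case dot3_simp sum_distrib_right)
    also have "\<dots> = (\<Sum>i\<le>d. \<Sum>j\<le>d-i. c i j * of_nat i * x^(i-1) * y^j * z^(d-i-j) * h1
       + c i j * of_nat j * x^i * y^(j-1) * z^(d-i-j) * h2
       + c i j * of_nat (d-i-j) * x^i * y^j * z^(d-i-j-1) * h3)"
      by (simp only: sum.distrib)
    also have "\<dots> = ?D h"
      unfolding v h fst_conv snd_conv
      apply (rule sum.cong[OF refl])
      apply (rule sum.cong[OF refl])
      by (simp only: ac_simps)
    finally show "?D h = dot3 (hgrad d c v) h" by simp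
  qed
  show ?thesis using 1 unfolding 2 3 .
qed

lemma hpoly_cont: "continuous_on UNIV (hpoly d c)"
  by (intro continuous_at_imp_continuous_on ballI has_derivative_continuous[OF hpoly_deriv])



lemma coeff_mult_top:
  fixes p q :: "'a::comm_semiring_1 poly"
  assumes "degree p \<le> m" "degree q \<le> n"
  shows "coeff (p*q) (m+n) = coeff p m * coeff q n"
proof -
  have "coeff (p*q) (m+n) = (\<Sum>i\<le>m+n. coeff p i * coeff q (m+n-i))" by (rule coeff_mult)
  also have "\<dots> = (\<Sum>i\<le>m+n. if i = m then coeff p m * coeff q n else 0)"
  proof (rule sum.cong[OF refl])
    fix i assume "i \<in> {..m+n}"
    show "coeff p i * coeff q (m+n-i) = (if i = m then coeff p m * coeff q n else 0)"
    proof (cases "i = m")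
      case False
      show ?thesis
      proof (cases "i < m")
        case True
        then have "coeff q (m+n-i) = 0" using assms(2) by (intro coeff_eq_0) auto
        then show ?thesis using False by simp
      next
        case f2: False
        then have "coeff p i = 0" using assms(1) False by (intro coeff_eq_0) auto
        then show ?thesis using False by simp
      qed
    qed simp
  qed
  also have "\<dots> = coeff p m * coeff q n" by simp
  finally show ?thesis .
qed

lemma power_top:
  fixes p :: "'a::comm_semiring_1 poly"
  assumes "degree p \<le> 1"
  shows "degree (p^n) \<le> n \<and> coeff (p^n) n = coeff p 1 ^ n"
proof (induction n)
  case 0
  then show ?case by simp
next
  case (Suc n)
  have "degree (p^Suc n) \<le> 1 + n"
    using degree_mult_le[of p "p^n"] Suc assms by simp
  moreover have "coeff (p * p^n) (1 + n) = coeff p 1 * coeff (p^n) n"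
    using coeff_mult_top[OF assms] Suc by blast
  ultimately show ?case using Suc by simp
qed

definition linp :: "complex \<Rightarrow> complex \<Rightarrow> complex \<Rightarrow> complex poly poly" where
  "linp a b u = [: [:a, b:], [:u:] :]"

lemma linp_deg: "degree (linp a b u) \<le> 1"
  unfolding linp_def by (simp add: degree_pCons_le)

lemma linp_coeff: "coeff (linp a b u) 1 = [:u:]" "coeff (linp a b u) (Suc 0) = [:u:]"
  unfolding linp_def by simp_all

lemma const_poly_power: "[:a:]^n = [:a^n:]"
  by (induct n) (auto simp: algebra_simps)

definition FP :: "nat \<Rightarrow> (nat \<Rightarrow> nat \<Rightarrow> complex) \<Rightarrow> pt3 \<Rightarrow> pt3 \<Rightarrow> pt3 \<Rightarrow> complex poly poly" where
  "FP d c q a b = (\<Sum>i\<le>d. \<Sum>j\<le>d-i. Polynomial.smult [:c i j:]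
     (linp (fst a) (fst b) (fst q) ^ i * linp (fst (snd a)) (fst (snd b)) (fst (snd q)) ^ j
       * linp (snd (snd a)) (snd (snd b)) (snd (snd q)) ^ (d-i-j)))"

definition ptl :: "pt3 \<Rightarrow> pt3 \<Rightarrow> pt3 \<Rightarrow> complex \<Rightarrow> complex \<Rightarrow> pt3" where
  "ptl q a b x z = (fst a + x * fst b + z * fst q, fst (snd a) + x * fst (snd b) + z * fst (snd q),
     snd (snd a) + x * snd (snd b) + z * snd (snd q))"


lemma map_poly_ev_smult: "map_poly (\<lambda>p. poly p x) (Polynomial.smult a P) = Polynomial.smult (poly a x) (map_poly (\<lambda>p. poly p x) P)"
  by (intro poly_eqI) (simp add: coeff_map_poly)

lemma FP_eval: "poly (map_poly (\<lambda>p. poly p x) (FP d c q a b)) z = hpoly d c (ptl q a b x z)"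
proof -
  interpret m: map_poly_comm_ring_hom "\<lambda>p. poly p x" by unfold_locales
  have l: "poly (map_poly (\<lambda>p. poly p x) (linp a1 b1 u1)) z = a1 + x * b1 + z * u1" for a1 b1 u1
    unfolding linp_def by (simp add: Polynomial.map_poly_pCons algebra_simps)
  show ?thesis
    unfolding FP_def hpoly_alt ptl_def
    by (simp add: m.hom_sum m.hom_mult m.hom_power map_poly_ev_smult poly_sum l mult.assoc)
qed

lemma const_poly_sum: "(\<Sum>i\<in>A. [:f i:]) = [:\<Sum>i\<in>A. f i:]"
  by (induct A rule: infinite_finite_induct) auto

lemma degree_sum_le': "(\<And>i. i \<in> A \<Longrightarrow> degree (f i) \<le> n) \<Longrightarrow> degree (sum f A) \<le> n"
proof (rule degree_le, intro allI impI)
  fix k assume "\<And>i. i \<in> A \<Longrightarrow> degree (f i) \<le> n" "n < k"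
  then show "coeff (sum f A) k = 0"
    unfolding coeff_sum by (intro sum.neutral ballI coeff_eq_0) (meson le_less_trans)
qed

lemma term_top:
  assumes "i + j \<le> d"
  shows "degree (linp a1 b1 u1 ^ i * linp a2 b2 u2 ^ j * linp a3 b3 u3 ^ (d-i-j)) \<le> d \<and>
    coeff (linp a1 b1 u1 ^ i * linp a2 b2 u2 ^ j * linp a3 b3 u3 ^ (d-i-j)) d = [:u1^i * u2^j * u3^(d-i-j):]"
proof -
  note p1 = power_top[OF linp_deg, of a1 b1 u1 i]
  note p2 = power_top[OF linp_deg, of a2 b2 u2 j]
  note p3 = power_top[OF linp_deg, of a3 b3 u3 "d-i-j"]
  have dA: "degree (linp a1 b1 u1 ^ i * linp a2 b2 u2 ^ j) \<le> i + j"
    using degree_mult_le[of "linp a1 b1 u1 ^ i" "linp a2 b2 u2 ^ j"] p1 p2 by linarith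
  have cA: "coeff (linp a1 b1 u1 ^ i * linp a2 b2 u2 ^ j) (i + j) = [:u1^i * u2^j:]"
    using coeff_mult_top[of "linp a1 b1 u1 ^ i" i "linp a2 b2 u2 ^ j" j] p1 p2
    by (simp add: linp_coeff const_poly_power)
  have "degree (linp a1 b1 u1 ^ i * linp a2 b2 u2 ^ j * linp a3 b3 u3 ^ (d-i-j)) \<le> (i+j) + (d-i-j)"
    using degree_mult_le[of "linp a1 b1 u1 ^ i * linp a2 b2 u2 ^ j" "linp a3 b3 u3 ^ (d-i-j)"] p3 dA by linarith
  moreover have "coeff (linp a1 b1 u1 ^ i * linp a2 b2 u2 ^ j * linp a3 b3 u3 ^ (d-i-j)) ((i+j) + (d-i-j))
     = [:u1^i * u2^j * u3^(d-i-j):]"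
    using coeff_mult_top[OF dA, of "linp a3 b3 u3 ^ (d-i-j)" "d-i-j"] p3 cA
    by (simp add: linp_coeff const_poly_power)
  moreover have "(i+j) + (d-i-j) = d" using assms by simp
  ultimately show ?thesis by simp
qed

lemma FP_deg: "degree (FP d c q a b) \<le> d"
  unfolding FP_def
  apply (rule degree_sum_le')
  apply (rule degree_sum_le')
  apply (rule order.trans[OF degree_smult_le])
  apply (rule term_top[THEN conjunct1])
  by auto

lemma FP_coeff: "coeff (FP d c q a b) d = [:hpoly d c q:]"
proof -
  have "coeff (FP d c q a b) d = (\<Sum>i\<le>d. \<Sum>j\<le>d-i. [: c i j * (fst q^i * fst (snd q)^j * snd (snd q)^(d-i-j)) :])"
    unfolding FP_def coeff_sum coeff_smult
    apply (rule sum.cong[OF refl])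
    apply (rule sum.cong[OF refl])
    apply (subst term_top[THEN conjunct2])
    by auto
  also have "\<dots> = [:hpoly d c q:]"
    by (simp add: const_poly_sum hpoly_alt mult.assoc)
  finally show ?thesis .
qed



lemma res_root:
  fixes p r :: "complex poly"
  assumes "resultant p r = 0"
  shows "\<exists>z. poly p z = 0 \<and> poly r z = 0"
proof -
  have "degree (gcd p r) \<noteq> 0" using assms resultant_0_gcd by blast
  then have "\<not> constant (poly (gcd p r))" by (simp add: constant_degree)
  then obtain z where z: "poly (gcd p r) z = 0" using fundamental_theorem_of_algebra by blast
  obtain k1 where k1: "p = gcd p r * k1" by (metis dvd_def gcd_dvd1)
  obtain k2 where k2: "r = gcd p r * k2" by (metis dvd_def gcd_dvd2)
  have "poly p z = 0" by (subst k1) (simp add: z)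
  moreover have "poly r z = 0" by (subst k2) (simp add: z)
  ultimately show ?thesis by blast
qed

lemma root_res:
  fixes p r :: "complex poly"
  assumes "p \<noteq> 0" "poly p z = 0" "poly r z = 0"
  shows "resultant p r = 0"
proof -
  have "[:-z,1:] dvd p" "[:-z,1:] dvd r" using assms by (simp_all add: poly_eq_0_iff_dvd)
  then have d: "[:-z,1:] dvd gcd p r" by simp
  have "gcd p r \<noteq> 0" using assms(1) by simp
  then have "degree [:-z,1:] \<le> degree (gcd p r)" using d dvd_imp_degree_le by blast
  then have "degree (gcd p r) \<noteq> 0" by simp
  then show ?thesis using resultant_0_gcd by blast
qed

lemma nonzero_poly_exists: "(p::complex poly) \<noteq> 0 \<Longrightarrow> \<exists>x. poly p x \<noteq> 0"
proof (rule ccontr)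
  assume "p \<noteq> 0" "\<not> (\<exists>x. poly p x \<noteq> 0)"
  then have "poly p = poly 0" by auto
  then have "p = 0" using poly_eq_poly_eq_iff by blast
  then show False using \<open>p \<noteq> 0\<close> by simp
qed

definition Bp :: "(nat \<Rightarrow> nat \<Rightarrow> complex) \<Rightarrow> nat \<Rightarrow> nat \<Rightarrow> complex poly" where
  "Bp c d i = (\<Sum>j\<le>d-i. monom (c i j) j)"
definition Ap :: "(nat \<Rightarrow> nat \<Rightarrow> complex) \<Rightarrow> nat \<Rightarrow> complex \<Rightarrow> complex poly" where
  "Ap c d y = (\<Sum>i\<le>d. monom (poly (Bp c d i) y) i)"

lemma hpoly_A: "hpoly d c (x,y,1) = poly (Ap c d y) x"
  by (simp add: hpoly_def Ap_def Bp_def poly_sum poly_monom sum_distrib_left mult_ac)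

lemma coeff_Bp: "j \<le> d - i \<Longrightarrow> coeff (Bp c d i) j = c i j"
  by (simp add: Bp_def coeff_sum coeff_monom)

lemma coeff_Ap: "i \<le> d \<Longrightarrow> coeff (Ap c d y) i = poly (Bp c d i) y"
  by (simp add: Ap_def coeff_sum coeff_monom)

lemma exists_q:
  assumes "i0 + j0 \<le> d" "c i0 j0 \<noteq> 0" "i1 + j1 \<le> d" "c' i1 j1 \<noteq> 0"
  shows "\<exists>x y. hpoly d c (x,y,1) \<noteq> 0 \<and> hpoly d c' (x,y,1) \<noteq> 0"
proof -
  have "coeff (Bp c d i0) j0 \<noteq> 0" using assms by (simp add: coeff_Bp)
  then have b0: "Bp c d i0 \<noteq> 0" by auto
  have "coeff (Bp c' d i1) j1 \<noteq> 0" using assms by (simp add: coeff_Bp)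
  then have b1: "Bp c' d i1 \<noteq> 0" by auto
  obtain y where y: "poly (Bp c d i0 * Bp c' d i1) y \<noteq> 0"
    using nonzero_poly_exists[of "Bp c d i0 * Bp c' d i1"] b0 b1 by auto
  have "coeff (Ap c d y) i0 \<noteq> 0" using y assms by (simp add: coeff_Ap)
  then have a0: "Ap c d y \<noteq> 0" by auto
  have "coeff (Ap c' d y) i1 \<noteq> 0" using y assms by (simp add: coeff_Ap)
  then have a1: "Ap c' d y \<noteq> 0" by auto
  obtain x where "poly (Ap c d y * Ap c' d y) x \<noteq> 0"
    using nonzero_poly_exists[of "Ap c d y * Ap c' d y"] a0 a1 by auto
  then show ?thesis by (auto simp: hpoly_A)
qed

definition PZ :: "nat \<Rightarrow> (nat \<Rightarrow> nat \<Rightarrow> complex) \<Rightarrow> pt3 \<Rightarrow> pt3 \<Rightarrow> complex poly" where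
  "PZ d c q w = map_poly (\<lambda>p. poly p 0) (FP d c q w (0,0,0))"

definition lin3 :: "pt3 \<Rightarrow> pt3 \<Rightarrow> complex \<Rightarrow> pt3" where
  "lin3 a b x = (fst a + x * fst b, fst (snd a) + x * fst (snd b), snd (snd a) + x * snd (snd b))"

lemma PZ_eval: "poly (PZ d c q w) z = hpoly d c (ptl q w (0,0,0) 0 z)"
  unfolding PZ_def by (rule FP_eval)

lemma FP_spec: "map_poly (\<lambda>p. poly p x) (FP d c q a b) = PZ d c q (lin3 a b x)"
proof -
  have "poly (map_poly (\<lambda>p. poly p x) (FP d c q a b)) = poly (PZ d c q (lin3 a b x))"
    by (rule ext) (simp add: FP_eval PZ_eval ptl_def lin3_def)
  then show ?thesis using poly_eq_poly_eq_iff by blast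
qed

lemma degree_spec:
  assumes "hpoly d c q \<noteq> 0"
  shows "degree (map_poly (\<lambda>p. poly p x) (FP d c q a b)) = d" "degree (FP d c q a b) = d"
proof -
  have c: "coeff (map_poly (\<lambda>p. poly p x) (FP d c q a b)) d = hpoly d c q"
    by (simp add: coeff_map_poly FP_coeff)
  have "degree (map_poly (\<lambda>p. poly p x) (FP d c q a b)) \<le> d"
    using degree_map_poly_le[of "\<lambda>p. poly p x" "FP d c q a b"] FP_deg[of d c q a b] by linarith
  moreover have "d \<le> degree (map_poly (\<lambda>p. poly p x) (FP d c q a b))"
    using c assms by (intro le_degree) simp
  ultimately show 1: "degree (map_poly (\<lambda>p. poly p x) (FP d c q a b)) = d" by simp
  have "d \<le> degree (FP d c q a b)"
    using assms by (intro le_degree) (simp add: FP_coeff)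
  then show "degree (FP d c q a b) = d" using FP_deg[of d c q a b] by simp
qed

lemma res_spec:
  assumes "hpoly d c q \<noteq> 0" "hpoly d c' q \<noteq> 0"
  shows "poly (resultant (FP d c q a b) (FP d c' q a b)) x
    = resultant (PZ d c q (lin3 a b x)) (PZ d c' q (lin3 a b x))"
proof -
  have h: "comm_ring_hom (\<lambda>p. poly p x)" by unfold_locales auto
  show ?thesis
    using comm_ring_hom.resultant_map_poly[OF h, where p="FP d c q a b" and q="FP d c' q a b"]
      degree_spec(1)[OF assms(1), where x=x and a=a and b=b] degree_spec(1)[OF assms(2), where x=x and a=a and b=b] degree_spec(2)[OF assms(1), where a=a and b=b] degree_spec(2)[OF assms(2), where a=a and b=b]
    by (simp add: FP_spec)
qed

lemma hpoly_zero: "d \<ge> 1 \<Longrightarrow> hpoly d c (0,0,0) = 0"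
  using hpoly_smult[of d c 0 "(0,0,0)"] by (cases d) (simp_all add: smult3_def)



lemma curves_meet_aux:
  assumes d1: "d \<ge> 1" and Fq: "hpoly d c q \<noteq> 0" and Gq: "hpoly d c' q \<noteq> 0" and q: "q = (x0,y0,1)"
  shows "\<exists>v. v \<noteq> (0,0,0) \<and> hpoly d c v = 0 \<and> hpoly d c' v = 0"
proof (rule ccontr)
  assume NZ: "\<not> (\<exists>v. v \<noteq> (0,0,0) \<and> hpoly d c v = 0 \<and> hpoly d c' v = 0)"
  define Phi where "Phi w = resultant (PZ d c q w) (PZ d c' q w)" for w
  have phi_nz: "Phi w \<noteq> 0" if "\<And>z. ptl q w (0,0,0) 0 z \<noteq> (0,0,0)" for w
  proof
    assume "Phi w = 0"
    then obtain z where "poly (PZ d c q w) z = 0" "poly (PZ d c' q w) z = 0"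
      unfolding Phi_def using res_root by blast
    then have "hpoly d c (ptl q w (0,0,0) 0 z) = 0" "hpoly d c' (ptl q w (0,0,0) 0 z) = 0"
      by (simp_all add: PZ_eval)
    then show False using NZ that[of z] by blast
  qed
  have PZ_nz: "PZ d c q w \<noteq> 0" for w
  proof
    assume "PZ d c q w = 0"
    then have "degree (map_poly (\<lambda>p. poly p 0) (FP d c q w (0,0,0))) = 0" by (simp add: PZ_def)
    then show False using degree_spec(1)[OF Fq] d1 by simp
  qed
  have phi0: "Phi (0,0,0) = 0"
    unfolding Phi_def
    by (rule root_res[OF PZ_nz, where z=0]) (simp_all add: PZ_eval ptl_def hpoly_zero[OF d1])
  have line: "poly (resultant (FP d c q a b) (FP d c' q a b)) t = Phi (lin3 a b t)" for a b t
    unfolding Phi_def by (rule res_spec[OF Fq Gq])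
  have step1: "Phi (x,0,0) = Phi (1,1,0)" if x: "x \<noteq> 0" for x
  proof -
    define R where "R = resultant (FP d c q (x,0,0) (1-x,1,0)) (FP d c' q (x,0,0) (1-x,1,0))"
    have "poly R t \<noteq> 0" for t
    proof -
      have "ptl q (lin3 (x,0,0) (1-x,1,0) t) (0,0,0) 0 z \<noteq> (0,0,0)" for z
      proof
        assume "ptl q (lin3 (x,0,0) (1-x,1,0) t) (0,0,0) 0 z = (0,0,0)"
        then have "x + t * (1-x) + z * x0 = 0" "t + z * y0 = 0" "z = 0"
          by (auto simp: ptl_def lin3_def q)
        then show False using x by simp
      qed
      then show ?thesis unfolding R_def line by (rule phi_nz)
    qed
    then have "\<not> (\<exists>z. poly R z = 0)" by blast
    then have "constant (poly R)" using fundamental_theorem_of_algebra by blast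
    then have "poly R 0 = poly R 1" unfolding constant_def by blast
    then show ?thesis unfolding R_def line by (simp add: lin3_def)
  qed
  define R where "R = resultant (FP d c q (0,0,0) (1,0,0)) (FP d c' q (0,0,0) (1,0,0))"
  have Rt: "poly R t = Phi (t,0,0)" for t unfolding R_def line by (simp add: lin3_def)
  define K where "K = Phi (1,1,0)"
  have K: "K \<noteq> 0" unfolding K_def
  proof (rule phi_nz)
    fix z show "ptl q (1,1,0) (0,0,0) 0 z \<noteq> (0,0,0)"
    proof
      assume "ptl q (1,1,0) (0,0,0) 0 z = (0,0,0)"
      then have "1 + z * y0 = 0" "z = 0" by (auto simp: ptl_def q)
      then show False by simp
    qed
  qed
  have "{t. t \<noteq> 0} \<subseteq> {t. poly (R - [:K:]) t = 0}"
    using step1 by (auto simp: Rt K_def)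
  moreover have "infinite {t::complex. t \<noteq> 0}"
  proof -
    have "{t::complex. t \<noteq> 0} = UNIV - {0}" by auto
    then show ?thesis by (simp add: infinite_UNIV_char_0)
  qed
  ultimately have "infinite {t. poly (R - [:K:]) t = 0}" using finite_subset by blast
  then have "R - [:K:] = 0" using poly_roots_finite by blast
  then have "poly R 0 = K" by (metis eq_iff_diff_eq_0 poly_const_conv)
  then show False using Rt[of 0] phi0 K by simp
qed

lemma curves_meet:
  assumes "d \<ge> 1" "\<exists>i j. i + j \<le> d \<and> c i j \<noteq> 0" "\<exists>i j. i + j \<le> d \<and> c' i j \<noteq> 0"
  shows "\<exists>v. v \<noteq> (0,0,0) \<and> hpoly d c v = 0 \<and> hpoly d c' v = 0"
proof -
  obtain x y where "hpoly d c (x,y,1) \<noteq> 0" "hpoly d c' (x,y,1) \<noteq> 0"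
    using exists_q assms(2,3) by metis
  then show ?thesis using curves_meet_aux[OF assms(1)] by blast
qed



lemma norm_fst_le': "norm a \<le> norm (a, b)"
  unfolding norm_Pair by (rule real_le_rsqrt) simp
lemma norm_snd_le': "norm b \<le> norm (a, b)"
  unfolding norm_Pair by (rule real_le_rsqrt) simp

lemma norm_mm: "norm (- x - y) = norm (x + (y::'a::real_normed_vector))"
proof -
  have "- x - y = - (x + y)" by simp
  then show ?thesis by (simp only: norm_minus_cancel)
qed

lemma det_nz:
  fixes a1 a2 a3 b1 b2 b3 x1 x2 x3 :: complex
  assumes "a1*x1 + a2*x2 + a3*x3 = 0" "b1*x1 + b2*x2 + b3*x3 = 0"
    and "(a2*b3 - a3*b2, a3*b1 - a1*b3, a1*b2 - a2*b1) \<noteq> (0,0,0)" and "x3 \<noteq> 0"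
  shows "a1*b2 - a2*b1 \<noteq> 0"
proof
  assume W3: "a1*b2 - a2*b1 = 0"
  have i1: "(a3*b1 - a1*b3) * x3 - (a1*b2 - a2*b1) * x2 = b1*(a1*x1 + a2*x2 + a3*x3) - a1*(b1*x1 + b2*x2 + b3*x3)"
    by (simp add: algebra_simps)
  have i2: "(a1*b2 - a2*b1) * x1 - (a2*b3 - a3*b2) * x3 = b2*(a1*x1 + a2*x2 + a3*x3) - a2*(b1*x1 + b2*x2 + b3*x3)"
    by (simp add: algebra_simps)
  have "(a3*b1 - a1*b3) * x3 = 0" using i1 W3 assms(1,2) by simp
  then have w2: "a3*b1 - a1*b3 = 0" using assms(4) by simp
  have "(a2*b3 - a3*b2) * x3 = 0" using i2 W3 assms(1,2) by simp
  then have w1: "a2*b3 - a3*b2 = 0" using assms(4) by simp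
  show False using w1 w2 W3 assms(3) by simp
qed

lemma core_iso:
  fixes F G :: "pt3 \<Rightarrow> complex"
  assumes F0: "F v0 = 0" and G0: "G v0 = 0"
    and dF: "(F has_derivative (\<lambda>h. dot3 u1 h)) (at v0)"
    and dG: "(G has_derivative (\<lambda>h. dot3 u2 h)) (at v0)"
    and det: "fst u1 * fst (snd u2) - fst (snd u1) * fst u2 \<noteq> 0"
  shows "\<exists>\<delta>>0. \<forall>h. norm h < \<delta> \<longrightarrow> snd (snd h) = 0 \<longrightarrow> F (v0 + h) = 0 \<longrightarrow> G (v0 + h) = 0 \<longrightarrow> h = 0"
proof -
  obtain a1 a2 a3 where u1: "u1 = (a1,a2,a3)" by (cases u1) auto
  obtain b1 b2 b3 where u2: "u2 = (b1,b2,b3)" by (cases u2) auto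
  define D where "D = a1*b2 - a2*b1"
  have D: "D \<noteq> 0" using det by (simp add: D_def u1 u2)
  define M where "M = cmod a1 + cmod a2 + cmod b1 + cmod b2"
  have M0: "M \<ge> 0" by (simp add: M_def)
  define e where "e = cmod D / (4 * (M + 1))"
  have e0: "e > 0" using D M0 by (simp add: e_def)
  obtain d1 where d1: "d1 > 0" "\<forall>y. norm (y - v0) < d1 \<longrightarrow> norm (F y - F v0 - dot3 u1 (y - v0)) \<le> e * norm (y - v0)"
    using dF e0 unfolding has_derivative_at_alt by blast
  obtain d2 where d2: "d2 > 0" "\<forall>y. norm (y - v0) < d2 \<longrightarrow> norm (G y - G v0 - dot3 u2 (y - v0)) \<le> e * norm (y - v0)"
    using dG e0 unfolding has_derivative_at_alt by blast
  show ?thesis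
  proof (intro exI[of _ "min d1 d2"] conjI allI impI)
    show "min d1 d2 > 0" using d1 d2 by simp
    fix h :: pt3
    assume h: "norm h < min d1 d2" "snd (snd h) = 0" "F (v0 + h) = 0" "G (v0 + h) = 0"
    obtain sa ta where hst: "h = (sa,ta,0)" using h(2) by (cases h) auto
    define N where "N = norm h"
    define A where "A = a1* sa + a2* ta"
    define B where "B = b1* sa + b2* ta"
    have A: "cmod A \<le> e * N"
      using d1(2)[rule_format, of "v0 + h"] h F0 by (simp add: N_def A_def u1 hst norm_mm)
    have B: "cmod B \<le> e * N"
      using d2(2)[rule_format, of "v0 + h"] h G0 by (simp add: N_def B_def u2 hst norm_mm)
    have ds: "D * sa = b2 * A - a2 * B" by (simp add: D_def A_def B_def algebra_simps)
    have dt: "D * ta = a1 * B - b1 * A" by (simp add: D_def A_def B_def algebra_simps)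
    have N0: "N \<ge> 0" by (simp add: N_def)
    have "cmod D * cmod sa = cmod (b2 * A - a2 * B)" by (simp add: ds[symmetric] norm_mult)
    also have "\<dots> \<le> cmod b2 * cmod A + cmod a2 * cmod B"
      by (metis norm_mult norm_triangle_ineq4)
    also have "\<dots> \<le> cmod b2 * (e*N) + cmod a2 * (e*N)"
      using A B by (intro add_mono mult_left_mono) auto
    finally have s1: "cmod D * cmod sa \<le> (cmod b2 + cmod a2) * (e*N)" by (simp add: algebra_simps)
    have "cmod D * cmod ta = cmod (a1 * B - b1 * A)" by (simp add: dt[symmetric] norm_mult)
    also have "\<dots> \<le> cmod a1 * cmod B + cmod b1 * cmod A"
      by (metis norm_mult norm_triangle_ineq4)
    also have "\<dots> \<le> cmod a1 * (e*N) + cmod b1 * (e*N)"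
      using A B by (intro add_mono mult_left_mono) auto
    finally have t1: "cmod D * cmod ta \<le> (cmod a1 + cmod b1) * (e*N)" by (simp add: algebra_simps)
    have Nst: "N \<le> cmod sa + cmod ta"
    proof -
      have "N \<le> cmod sa + norm (ta, 0::complex)" unfolding N_def hst by (rule norm_Pair_le)
      moreover have "norm (ta, 0::complex) = cmod ta" by (simp add: norm_Pair)
      ultimately show ?thesis by simp
    qed
    have "cmod D * N \<le> cmod D * cmod sa + cmod D * cmod ta"
      using Nst by (simp add: distrib_left[symmetric] mult_left_mono)
    also have "\<dots> \<le> M * (e * N)" using s1 t1 by (simp add: M_def algebra_simps)
    also have "M * e \<le> cmod D / 4"
    proof -
      have "M * e = cmod D / 4 * (M / (M+1))" using M0 by (simp add: e_def field_simps)
      also have "\<dots> \<le> cmod D / 4 * 1" using M0 by (intro mult_left_mono) auto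
      finally show ?thesis by simp
    qed
    then have "M * (e * N) \<le> cmod D / 4 * N" using N0
      by (metis mult.assoc mult_right_mono)
    finally have "cmod D * N \<le> cmod D / 4 * N" .
    moreover have "cmod D / 4 * N = (cmod D * N) / 4" by simp
    ultimately have "cmod D * N \<le> cmod D * 0" by linarith
    then have "N \<le> 0" using D mult_le_cancel_left_pos[of "cmod D" N 0] by simp
    then show "h = 0" using N0 by (simp add: N_def)
  qed
qed

lemma norm_c3_le: "cmod (snd (snd p)) \<le> norm (p::pt3)"
proof -
  have "cmod (snd (snd p)) \<le> norm (snd p)" using norm_snd_le'[of "snd (snd p)" "fst (snd p)"] by simp
  also have "\<dots> \<le> norm p" using norm_snd_le'[of "snd p" "fst p"] by simp
  finally show ?thesis .
qed

lemma smult3_simp[simp]: "smult3 a (x,y,z) = (a*x, a*y, a*z)"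
  by (simp add: smult3_def)

lemma iso3:
  fixes F G :: "pt3 \<Rightarrow> complex"
  assumes homF: "\<And>a w. F (smult3 a w) = a^d * F w" and homG: "\<And>a w. G (smult3 a w) = a^d * G w"
    and F0: "F v0 = 0" and G0: "G v0 = 0"
    and dF: "(F has_derivative (\<lambda>h. dot3 u1 h)) (at v0)"
    and dG: "(G has_derivative (\<lambda>h. dot3 u2 h)) (at v0)"
    and e1: "dot3 u1 v0 = 0" and e2: "dot3 u2 v0 = 0"
    and cr: "Defs.cross3 u1 u2 \<noteq> (0,0,0)" and v3: "snd (snd v0) \<noteq> 0"
  shows "\<exists>\<delta>>0. \<forall>w. dist w v0 < \<delta> \<longrightarrow> F w = 0 \<longrightarrow> G w = 0 \<longrightarrow> (\<exists>a. w = smult3 a v0)"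
proof -
  obtain a1 a2 a3 where u1: "u1 = (a1,a2,a3)" by (cases u1) auto
  obtain b1 b2 b3 where u2: "u2 = (b1,b2,b3)" by (cases u2) auto
  obtain x1 x2 x3 where v0: "v0 = (x1,x2,x3)" by (cases v0) auto
  have x3: "x3 \<noteq> 0" using v3 v0 by simp
  have det: "a1*b2 - a2*b1 \<noteq> 0"
    using det_nz[of a1 x1 a2 x2 a3 x3 b1 b2 b3] e1 e2 cr v3 by (simp add: u1 u2 v0 Defs.cross3_def)
  obtain \<delta> where \<delta>: "\<delta> > 0" "\<forall>h. norm h < \<delta> \<longrightarrow> snd (snd h) = 0 \<longrightarrow> F (v0 + h) = 0 \<longrightarrow> G (v0 + h) = 0 \<longrightarrow> h = 0"
    using core_iso[OF F0 G0 dF dG] det by (auto simp: u1 u2)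
  define g where "g w = (x3 / snd (snd w) * fst w - x1, x3 / snd (snd w) * fst (snd w) - x2,
      x3 / snd (snd w) * snd (snd w) - x3)" for w :: pt3
  have "isCont g v0" unfolding g_def by (intro continuous_intros) (simp_all add: v0 x3)
  moreover have g0: "g v0 = 0" using v3 by (simp add: g_def v0 zero_prod_def)
  ultimately obtain \<delta>' where \<delta>': "\<delta>' > 0" "\<forall>w. dist w v0 < \<delta>' \<longrightarrow> dist (g w) 0 < \<delta>"
    using \<delta>(1) unfolding continuous_at_eps_delta by metis
  show ?thesis
  proof (intro exI[of _ "min \<delta>' (cmod x3)"] conjI allI impI)
    show "min \<delta>' (cmod x3) > 0" using \<delta>' v3 v0 by simp
    fix w :: pt3 assume w: "dist w v0 < min \<delta>' (cmod x3)" "F w = 0" "G w = 0"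
    obtain w1 w2 w3 where wc: "w = (w1,w2,w3)" by (cases w) auto
    have "cmod (w3 - x3) \<le> norm (w - v0)" using norm_c3_le[of "w - v0"] by (simp add: wc v0)
    also have "\<dots> < cmod x3" using w(1) by (simp add: dist_norm)
    finally have w3: "w3 \<noteq> 0" by auto
    define l where "l = x3 / w3"
    have l0: "l \<noteq> 0" using w3 v3 v0 by (simp add: l_def)
    have gw: "g w = (l * w1 - x1, l * w2 - x2, 0)" using w3 by (simp add: g_def wc l_def)
    have sw: "v0 + g w = smult3 l w" unfolding gw using w3 by (simp add: v0 wc l_def)
    have "norm (g w) < \<delta>" using \<delta>'(2)[rule_format, of w] w(1) by (simp add: dist_norm)
    moreover have "F (v0 + g w) = 0" unfolding sw homF using w by simp
    moreover have "G (v0 + g w) = 0" unfolding sw homG using w by simp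
    ultimately have "g w = 0" using \<delta>(2) gw by simp
    then have "smult3 l w = v0" using sw by simp
    then have "w = smult3 (1/l) v0" using l0 by (auto simp: wc v0)
    then show "\<exists>a. w = smult3 a v0" by blast
  qed
qed



definition rot :: "pt3 \<Rightarrow> pt3" where "rot v = (fst (snd v), snd (snd v), fst v)"
definition rinv :: "pt3 \<Rightarrow> pt3" where "rinv v = (snd (snd v), fst v, fst (snd v))"

lemma rot_rinv[simp]: "rot (rinv v) = v" "rinv (rot v) = v"
  by (simp_all add: rot_def rinv_def)

lemma norm3: "norm ((a,b,c)::pt3) = sqrt (cmod a ^ 2 + cmod b ^ 2 + cmod c ^ 2)"
  by (simp add: norm_Pair add.assoc)

lemma norm_rot: "norm (rot v) = norm v" "norm (rinv v) = norm v"
  by (cases v, simp add: rot_def rinv_def norm3 add_ac)+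

lemma rot_diff: "rot (w - v) = rot w - rot v" "rinv (w - v) = rinv w - rinv v"
  by (simp_all add: rot_def rinv_def)

lemma dist_rot: "dist (rot w) (rot v) = dist w v" "dist (rinv w) (rinv v) = dist w v"
  by (simp_all add: dist_norm rot_diff[symmetric] norm_rot)

lemma dot_rot: "dot3 u (rot h) = dot3 (rinv u) h"
  by (cases u, cases h) (simp add: rot_def rinv_def algebra_simps)

lemma rot_smult: "rot (smult3 a w) = smult3 a (rot w)" "rinv (smult3 a w) = smult3 a (rinv w)"
  by (cases w, simp add: rot_def rinv_def)+

lemma cross_rinv: "Defs.cross3 (rinv a) (rinv b) = rinv (Defs.cross3 a b)"
  by (cases a, cases b) (simp add: rinv_def Defs.cross3_def)

lemma bl_rot: "bounded_linear rot"
proof (rule bounded_linear_intro[where K=1])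
  show "rot (x + y) = rot x + rot y" for x y by (simp add: rot_def)
  show "rot (r *\<^sub>R x) = r *\<^sub>R rot x" for r x by (simp add: rot_def)
  show "norm (rot x) \<le> norm x * 1" for x by (simp add: norm_rot)
qed

definition HYP :: "nat \<Rightarrow> (pt3 \<Rightarrow> complex) \<Rightarrow> (pt3 \<Rightarrow> complex) \<Rightarrow> pt3 \<Rightarrow> pt3 \<Rightarrow> pt3 \<Rightarrow> bool" where
  "HYP d F G u1 u2 v0 \<longleftrightarrow> (\<forall>a w. F (smult3 a w) = a^d * F w) \<and> (\<forall>a w. G (smult3 a w) = a^d * G w)
     \<and> F v0 = 0 \<and> G v0 = 0 \<and> (F has_derivative (\<lambda>h. dot3 u1 h)) (at v0)
     \<and> (G has_derivative (\<lambda>h. dot3 u2 h)) (at v0) \<and> dot3 u1 v0 = 0 \<and> dot3 u2 v0 = 0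
     \<and> Defs.cross3 u1 u2 \<noteq> (0,0,0)"

definition CONC :: "(pt3 \<Rightarrow> complex) \<Rightarrow> (pt3 \<Rightarrow> complex) \<Rightarrow> pt3 \<Rightarrow> bool" where
  "CONC F G v0 \<longleftrightarrow> (\<exists>\<delta>>0. \<forall>w. dist w v0 < \<delta> \<longrightarrow> F w = 0 \<longrightarrow> G w = 0 \<longrightarrow> (\<exists>a. w = smult3 a v0))"

lemma HYP_CONC3: "HYP d F G u1 u2 v0 \<Longrightarrow> snd (snd v0) \<noteq> 0 \<Longrightarrow> CONC F G v0"
  unfolding HYP_def CONC_def using iso3[of F d G v0 u1 u2] by blast

lemma deriv_rot:
  assumes "(F has_derivative (\<lambda>h. dot3 u h)) (at (rot v))"
  shows "((F \<circ> rot) has_derivative (\<lambda>h. dot3 (rinv u) h)) (at v)"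
proof -
  have "(rot has_derivative rot) (at v)" using bl_rot by (rule bounded_linear.has_derivative[OF _ has_derivative_ident])
  then have "((F \<circ> rot) has_derivative ((\<lambda>h. dot3 u h) \<circ> rot)) (at v)"
    using assms by (rule diff_chain_at)
  moreover have "((\<lambda>h. dot3 u h) \<circ> rot) = (\<lambda>h. dot3 (rinv u) h)" by (rule ext) (simp add: dot_rot)
  ultimately show ?thesis by simp
qed

lemma HYP_rot: "HYP d F G u1 u2 v0 \<Longrightarrow> HYP d (F \<circ> rot) (G \<circ> rot) (rinv u1) (rinv u2) (rinv v0)"
proof -
  assume H: "HYP d F G u1 u2 v0"
  have cr: "Defs.cross3 (rinv u1) (rinv u2) \<noteq> (0,0,0)"
  proof
    assume "Defs.cross3 (rinv u1) (rinv u2) = (0,0,0)"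
    then have "rot (Defs.cross3 (rinv u1) (rinv u2)) = (0,0,0)" by (simp add: rot_def)
    then show False using H by (simp add: cross_rinv HYP_def)
  qed
  have h1: "(F \<circ> rot) (smult3 a w) = a^d * (F \<circ> rot) w" for a w
    using H unfolding HYP_def comp_def rot_smult by blast
  have h2: "(G \<circ> rot) (smult3 a w) = a^d * (G \<circ> rot) w" for a w
    using H unfolding HYP_def comp_def rot_smult by blast
  have d1: "((F \<circ> rot) has_derivative (\<lambda>h. dot3 (rinv u1) h)) (at (rinv v0))"
    using H unfolding HYP_def by (intro deriv_rot) simp
  have d2: "((G \<circ> rot) has_derivative (\<lambda>h. dot3 (rinv u2) h)) (at (rinv v0))"
    using H unfolding HYP_def by (intro deriv_rot) simp
  have e: "dot3 (rinv u1) (rinv v0) = 0" "dot3 (rinv u2) (rinv v0) = 0"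
    using H unfolding HYP_def dot_rot[symmetric] by simp_all
  have z: "(F \<circ> rot) (rinv v0) = 0" "(G \<circ> rot) (rinv v0) = 0"
    using H unfolding HYP_def by simp_all
  show ?thesis unfolding HYP_def using h1 h2 d1 d2 e z cr by blast
qed

lemma CONC_rot: "CONC (F \<circ> rot) (G \<circ> rot) (rinv v0) \<Longrightarrow> CONC F G v0"
proof -
  assume "CONC (F \<circ> rot) (G \<circ> rot) (rinv v0)"
  then obtain \<delta> where \<delta>: "\<delta> > 0" "\<forall>w. dist w (rinv v0) < \<delta> \<longrightarrow> F (rot w) = 0 \<longrightarrow> G (rot w) = 0 \<longrightarrow> (\<exists>a. w = smult3 a (rinv v0))"
    unfolding CONC_def by auto
  show ?thesis unfolding CONC_def
  proof (intro exI[of _ \<delta>] conjI allI impI)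
    fix w assume w: "dist w v0 < \<delta>" "F w = 0" "G w = 0"
    then obtain a where "rinv w = smult3 a (rinv v0)" using \<delta>(2)[rule_format, of "rinv w"] by (auto simp: dist_rot)
    then have "rot (rinv w) = rot (smult3 a (rinv v0))" by simp
    then show "\<exists>a. w = smult3 a v0" by (auto simp: rot_smult)
  qed (use \<delta> in auto)
qed

lemma HYP_CONC: "HYP d F G u1 u2 v0 \<Longrightarrow> v0 \<noteq> (0,0,0) \<Longrightarrow> CONC F G v0"
proof -
  assume H: "HYP d F G u1 u2 v0" and v: "v0 \<noteq> (0,0,0)"
  obtain x1 x2 x3 where v0: "v0 = (x1,x2,x3)" by (cases v0) auto
  show ?thesis
  proof (cases "x3 \<noteq> 0")
    case True
    then have "snd (snd v0) \<noteq> 0" by (simp add: v0)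
    then show ?thesis by (rule HYP_CONC3[OF H])
  next
    case False
    show ?thesis
    proof (cases "x2 \<noteq> 0")
      case True
      then have "snd (snd (rinv v0)) \<noteq> 0" by (simp add: v0 rinv_def)
      then have "CONC (F \<circ> rot) (G \<circ> rot) (rinv v0)" by (rule HYP_CONC3[OF HYP_rot[OF H]])
      then show ?thesis by (rule CONC_rot)
    next
      case f2: False
      then have x1: "x1 \<noteq> 0" using False v v0 by simp
      then have "snd (snd (rinv (rinv v0))) \<noteq> 0" by (simp add: v0 rinv_def)
      then have "CONC ((F \<circ> rot) \<circ> rot) ((G \<circ> rot) \<circ> rot) (rinv (rinv v0))"
        by (rule HYP_CONC3[OF HYP_rot[OF HYP_rot[OF H]]])
      then show ?thesis by (rule CONC_rot[OF CONC_rot])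
    qed
  qed
qed



lemma smult3_smult3: "smult3 a (smult3 b v) = smult3 (a*b) v"
  by (cases v) (simp add: mult.assoc)

lemma smult3_one: "smult3 1 v = v"
  by (cases v) simp

lemma in_proj: "w \<in> proj v \<longleftrightarrow> (\<exists>a. a \<noteq> 0 \<and> w = smult3 a v)"
  unfolding proj_def by blast

lemma self_in_proj: "v \<in> proj v"
  unfolding in_proj by (intro exI[of _ 1]) (simp add: smult3_one)

lemma proj_smult: "a \<noteq> 0 \<Longrightarrow> proj (smult3 a v) = proj v"
proof -
  assume a: "a \<noteq> 0"
  show ?thesis
  proof
    show "proj (smult3 a v) \<subseteq> proj v" unfolding in_proj[abs_def] proj_def
      using a by (auto simp: smult3_smult3)
    show "proj v \<subseteq> proj (smult3 a v)"
    proof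
      fix w assume "w \<in> proj v"
      then obtain b where b: "b \<noteq> 0" "w = smult3 b v" unfolding in_proj by blast
      then have "w = smult3 (b / a) (smult3 a v)" using a by (simp add: smult3_smult3)
      moreover have "b / a \<noteq> 0" using a b by simp
      ultimately show "w \<in> proj (smult3 a v)" unfolding in_proj by blast
    qed
  qed
qed

lemma proj_eq_imp: "proj v = proj w \<Longrightarrow> \<exists>a. a \<noteq> 0 \<and> w = smult3 a v"
  using self_in_proj[of w] in_proj by blast

lemma smult3_zero: "smult3 a v = (0,0,0) \<Longrightarrow> v \<noteq> (0,0,0) \<Longrightarrow> a = 0"
  by (cases v) auto

lemma smult3_real: "smult3 (complex_of_real r) v = r *\<^sub>R v"
  by (cases v) (simp add: scaleR_conv_of_real)

lemma closed_zero: "closed {v::pt3. hpoly d c v = 0}"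
  using closed_Collect_eq[OF hpoly_cont continuous_on_const] by simp

lemma finite_common:
  assumes tr: "\<forall>v. v \<noteq> (0,0,0) \<and> hpoly d c v = 0 \<and> hpoly d c' v = 0 \<longrightarrow>
       Defs.cross3 (hgrad d c v) (hgrad d c' v) \<noteq> (0,0,0)"
  shows "finite {proj v | v. v \<noteq> (0,0,0) \<and> hpoly d c v = 0 \<and> hpoly d c' v = 0}"
proof (rule ccontr)
  define X where "X = {proj v | v. v \<noteq> (0,0,0) \<and> hpoly d c v = 0 \<and> hpoly d c' v = 0}"
  assume "infinite {proj v | v. v \<noteq> (0,0,0) \<and> hpoly d c v = 0 \<and> hpoly d c' v = 0}"
  then have inf: "infinite X" unfolding X_def .
  define S where "S = sphere (0::pt3) 1 \<inter> {v. hpoly d c v = 0} \<inter> {v. hpoly d c' v = 0}"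
  have cS: "compact S" unfolding S_def
    by (intro compact_Int_closed closed_zero compact_sphere)
  have ex: "\<exists>v. v \<in> S \<and> proj v = P" if PX: "P \<in> X" for P
  proof -
    obtain v where v: "P = proj v" "v \<noteq> (0,0,0)" "hpoly d c v = 0" "hpoly d c' v = 0"
      using PX[unfolded X_def] by blast
    have nv: "norm v \<noteq> 0" using v(2) by (simp add: zero_prod_def)
    define w where "w = smult3 (complex_of_real (1 / norm v)) v"
    have "norm w = 1" unfolding w_def smult3_real using nv by simp
    moreover have "hpoly d c w = 0" "hpoly d c' w = 0" unfolding w_def hpoly_smult using v by simp_all
    moreover have "proj w = P" unfolding w_def using nv v(1) by (simp add: proj_smult)
    ultimately have "w \<in> S \<and> proj w = P" unfolding S_def by simp
    then show ?thesis by blast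
  qed
  define rep where "rep P = (SOME v. v \<in> S \<and> proj v = P)" for P
  have rep: "rep P \<in> S" "proj (rep P) = P" if "P \<in> X" for P
    using someI_ex[OF ex[OF that]] unfolding rep_def by auto
  have "inj_on rep X" by (metis inj_onI rep(2))
  then have infT: "infinite (rep ` X)" using inf finite_imageD by blast
  have TS: "rep ` X \<subseteq> S" using rep by auto
  obtain v0 where v0: "v0 \<in> S" "v0 islimpt (rep ` X)"
    using cS infT TS unfolding compact_eq_Bolzano_Weierstrass by blast
  have v0nz: "v0 \<noteq> (0,0,0)" using v0(1) by (auto simp: S_def zero_prod_def[symmetric])
  have F0: "hpoly d c v0 = 0" "hpoly d c' v0 = 0" using v0(1) by (auto simp: S_def)
  have "HYP d (hpoly d c) (hpoly d c') (hgrad d c v0) (hgrad d c' v0) v0"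
  proof -
    have "Defs.cross3 (hgrad d c v0) (hgrad d c' v0) \<noteq> (0,0,0)" using F0 v0nz tr by blast
    then show ?thesis unfolding HYP_def using F0 by (simp add: hpoly_smult hpoly_deriv euler)
  qed
  then obtain \<delta> where \<delta>: "\<delta> > 0" "\<forall>w. dist w v0 < \<delta> \<longrightarrow> hpoly d c w = 0 \<longrightarrow> hpoly d c' w = 0 \<longrightarrow> (\<exists>a. w = smult3 a v0)"
    using HYP_CONC v0nz unfolding CONC_def by blast
  have near: "proj y = proj v0" if yX: "y \<in> rep ` X" and yd: "dist y v0 < \<delta>" for y
  proof -
    have yS: "y \<in> S" using yX TS by auto
    have "\<exists>a. y = smult3 a v0" using \<delta>(2)[rule_format, of y] yd yS by (simp add: S_def)
    then obtain a where a: "y = smult3 a v0" by blast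
    have "y \<noteq> (0,0,0)" using yS by (auto simp: S_def zero_prod_def[symmetric])
    then have "a \<noteq> 0" using a by (cases v0) auto
    then show ?thesis using a proj_smult by simp
  qed
  obtain y1 where y1: "y1 \<in> rep ` X" "y1 \<noteq> v0" "dist y1 v0 < \<delta>"
    using v0(2) \<delta>(1) unfolding islimpt_approachable by blast
  have "rep ` X = insert y1 (rep ` X - {y1})" using y1(1) by blast
  then have "v0 islimpt (rep ` X - {y1})" using v0(2) islimpt_insert by metis
  then obtain y2 where y2: "y2 \<in> rep ` X - {y1}" "y2 \<noteq> v0" "dist y2 v0 < \<delta>"
    using \<delta>(1) unfolding islimpt_approachable by blast
  obtain P1 where P1: "P1 \<in> X" "y1 = rep P1" using y1 by blast
  obtain P2 where P2: "P2 \<in> X" "y2 = rep P2" using y2 by blast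
  have "P1 = proj v0" using near[OF y1(1) y1(3)] rep(2)[OF P1(1)] P1(2) by simp
  moreover have "P2 = proj v0" using near[of y2] y2 rep(2)[OF P2(1)] P2(2) by simp
  ultimately have "y1 = y2" using P1 P2 by simp
  then show False using y2 by simp
qed

lemma curve_inter: "curve d c \<inter> curve d c' = {proj v | v. v \<noteq> (0,0,0) \<and> hpoly d c v = 0 \<and> hpoly d c' v = 0}"
proof
  show "curve d c \<inter> curve d c' \<subseteq> {proj v | v. v \<noteq> (0,0,0) \<and> hpoly d c v = 0 \<and> hpoly d c' v = 0}"
  proof
    fix P assume "P \<in> curve d c \<inter> curve d c'"
    then obtain v1 v2 where v: "P = proj v1" "v1 \<noteq> (0,0,0)" "hpoly d c v1 = 0"
        "P = proj v2" "v2 \<noteq> (0,0,0)" "hpoly d c' v2 = 0"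
      unfolding curve_def by blast
    then obtain a where a: "a \<noteq> 0" "v2 = smult3 a v1" using proj_eq_imp by metis
    then have "hpoly d c' v1 = 0" using v(6) by (simp add: hpoly_smult)
    then show "P \<in> {proj v | v. v \<noteq> (0,0,0) \<and> hpoly d c v = 0 \<and> hpoly d c' v = 0}" using v by blast
  qed
  show "{proj v | v. v \<noteq> (0,0,0) \<and> hpoly d c v = 0 \<and> hpoly d c' v = 0} \<subseteq> curve d c \<inter> curve d c'"
    unfolding curve_def by blast
qed



lemma cycle6:
  assumes Ps: "P \<in> sing_locus d k cs" and Qs: "Q \<in> sing_locus d k cs" and Rs: "R \<in> sing_locus d k cs"
    and ijl: "i < k" "j < k" "l < k" "i \<noteq> j" "j \<noteq> l" "i \<noteq> l"
    and P: "P \<in> curve d (cs i)" "P \<in> curve d (cs j)" "P \<notin> curve d (cs l)"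
    and Q: "Q \<in> curve d (cs j)" "Q \<in> curve d (cs l)" "Q \<notin> curve d (cs i)"
    and R: "R \<in> curve d (cs i)" "R \<in> curve d (cs l)" "R \<notin> curve d (cs j)"
  shows "induced_cycle (levi_vertices d k cs) (levi_adj d k cs) [Inl P, Inr j, Inl Q, Inr l, Inl R, Inr i]"
proof -
  have PQ: "P \<noteq> Q" using P Q by auto
  have PR: "P \<noteq> R" using P R by auto
  have QR: "Q \<noteq> R" using Q R by auto
  let ?c = "[Inl P, Inr j, Inl Q, Inr l, Inl R, Inr i] :: (pt3 set + nat) list"
  have adj: "levi_adj d k cs (?c ! a) (?c ! b) \<longleftrightarrow> (b = Suc a mod length ?c \<or> a = Suc b mod length ?c)"
    if "a < length ?c" "b < length ?c" for a b
  proof -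
    have A: "a = 0 \<or> a = 1 \<or> a = 2 \<or> a = 3 \<or> a = 4 \<or> a = 5" using that by auto
    have B: "b = 0 \<or> b = 1 \<or> b = 2 \<or> b = 3 \<or> b = 4 \<or> b = 5" using that by auto
    from A B show ?thesis by (elim disjE) (simp_all add: Ps Qs Rs ijl P Q R)
  qed
  show ?thesis unfolding induced_cycle_def
    using adj PQ PR QR ijl Ps Qs Rs by (auto simp: levi_vertices_def)
qed



theorem theorem5p1:
  fixes d k :: nat and cs :: "nat \<Rightarrow> nat \<Rightarrow> nat \<Rightarrow> complex"
  assumes "d_arrangement d k cs"
    and "t_count d k cs k = 0"
  shows "\<exists>cyc. induced_cycle (levi_vertices d k cs) (levi_adj d k cs) cyc \<and> length cyc = 6"
proof -
  note A = assms(1)[unfolded d_arrangement_def]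
  have d1: "d \<ge> 1" and k3: "k \<ge> 3" using A by auto
  have sm: "\<exists>a b. a + b \<le> d \<and> cs i a b \<noteq> 0" if "i < k" for i
    using A that unfolding smooth_curve_def by blast
  have tr: "\<forall>v. v \<noteq> (0,0,0) \<and> hpoly d (cs i) v = 0 \<and> hpoly d (cs j) v = 0 \<longrightarrow>
       Defs.cross3 (hgrad d (cs i) v) (hgrad d (cs j) v) \<noteq> (0,0,0)"
    if "i < k" "j < k" "i \<noteq> j" for i j
    using A that by blast
  define C where "C i = curve d (cs i)" for i
  define S where "S i j = C i \<inter> C j" for i j
  have ne: "S i j \<noteq> {}" if ik: "i < k" and jk: "j < k" and "i \<noteq> j" for i j
  proof -
    obtain v where v: "v \<noteq> (0,0,0)" "hpoly d (cs i) v = 0" "hpoly d (cs j) v = 0"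
      using curves_meet[OF d1 sm[OF ik] sm[OF jk]] by blast
    then have "proj v \<in> S i j" unfolding S_def C_def curve_def by blast
    then show ?thesis by blast
  qed
  have fin: "finite (S i j)" if "i < k" "j < k" "i \<noteq> j" for i j
    unfolding S_def C_def curve_inter using finite_common[OF tr[OF that]] .
  define Pairs where "Pairs = {(i,j). i < k \<and> j < k \<and> i \<noteq> j}"
  have finP: "finite Pairs"
  proof (rule finite_subset)
    show "Pairs \<subseteq> {..<k} \<times> {..<k}" unfolding Pairs_def by auto
  qed simp
  have neP: "(0,1) \<in> Pairs" using k3 unfolding Pairs_def by auto
  define g where "g p = card (S (fst p) (snd p))" for p
  define m where "m = Min (g ` Pairs)"
  have "m \<in> g ` Pairs" unfolding m_def using finP neP by (intro Min_in) auto
  then obtain i j where ij: "(i,j) \<in> Pairs" "g (i,j) = m" by auto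
  have ijk: "i < k" "j < k" "i \<noteq> j" using ij(1) unfolding Pairs_def by auto
  have minimal: "card (S i j) \<le> card (S i' j')" if "i' < k" "j' < k" "i' \<noteq> j'" for i' j'
  proof -
    have "(i',j') \<in> Pairs" using that unfolding Pairs_def by auto
    then have "m \<le> g (i',j')" unfolding m_def using finP by (intro Min_le) auto
    then show ?thesis using ij(2) unfolding g_def by simp
  qed
  have "\<exists>l<k. \<not> S i j \<subseteq> C l"
  proof (rule ccontr)
    assume "\<not> (\<exists>l<k. \<not> S i j \<subseteq> C l)"
    then have all: "S i j \<subseteq> C l" if "l < k" for l using that by blast
    define X where "X = {P \<in> sing_locus d k cs. card {i'. i' < k \<and> P \<in> curve d (cs i')} = k}"
    have SX: "S i j \<subseteq> X"
    proof
      fix P assume P: "P \<in> S i j"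
      have "P \<in> sing_locus d k cs" using P ijk unfolding sing_locus_def S_def C_def by blast
      moreover have "{i'. i' < k \<and> P \<in> curve d (cs i')} = {..<k}" using all P unfolding C_def by blast
      ultimately show "P \<in> X" unfolding X_def by simp
    qed
    have XS: "X \<subseteq> S i j"
    proof
      fix P assume P: "P \<in> X"
      have sub: "{i'. i' < k \<and> P \<in> curve d (cs i')} \<subseteq> {..<k}" by auto
      have "card {i'. i' < k \<and> P \<in> curve d (cs i')} = card {..<k}" using P unfolding X_def by simp
      then have "{i'. i' < k \<and> P \<in> curve d (cs i')} = {..<k}"
        using card_subset_eq[OF _ sub] by simp
      then show "P \<in> S i j" using ijk unfolding S_def C_def by blast
    qed
    have "finite X" using finite_subset[OF XS fin[OF ijk]] .
    moreover have "card X = 0" using assms(2) unfolding t_count_def X_def .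
    ultimately have "X = {}" by simp
    then show False using SX ne[OF ijk] by blast
  qed
  then obtain l P where l: "l < k" and P: "P \<in> S i j" "P \<notin> C l" by blast
  have li: "l \<noteq> i" and lj: "l \<noteq> j" using P unfolding S_def by auto
  have lt: "card (S i j - {P}) < card (S i j)" using fin[OF ijk] P(1) by (rule card_Diff1_less)
  have "\<not> S j l \<subseteq> C i"
  proof
    assume "S j l \<subseteq> C i"
    then have "S j l \<subseteq> S i j - {P}" using P unfolding S_def by blast
    then have "card (S j l) \<le> card (S i j - {P})" using fin[OF ijk] by (intro card_mono) auto
    then show False using lt minimal[of j l] ijk l lj by simp
  qed
  then obtain Q where Q: "Q \<in> S j l" "Q \<notin> C i" by blast
  have "\<not> S i l \<subseteq> C j"
  proof
    assume "S i l \<subseteq> C j"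
    then have "S i l \<subseteq> S i j - {P}" using P unfolding S_def by blast
    then have "card (S i l) \<le> card (S i j - {P})" using fin[OF ijk] by (intro card_mono) auto
    then show False using lt minimal[of i l] ijk l li by simp
  qed
  then obtain R where R: "R \<in> S i l" "R \<notin> C j" by blast
  have Ps: "P \<in> sing_locus d k cs" using P ijk unfolding sing_locus_def S_def C_def by blast
  have Qs: "Q \<in> sing_locus d k cs" using Q ijk l lj unfolding sing_locus_def S_def C_def by blast
  have Rs: "R \<in> sing_locus d k cs" using R ijk l li unfolding sing_locus_def S_def C_def by blast
  have "induced_cycle (levi_vertices d k cs) (levi_adj d k cs) [Inl P, Inr j, Inl Q, Inr l, Inl R, Inr i]"
    using P Q R ijk l li lj unfolding S_def C_def by (intro cycle6[OF Ps Qs Rs]) auto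
  then show ?thesis by (intro exI[of _ "[Inl P, Inr j, Inl Q, Inr l, Inl R, Inr i]"]) simp
qed


end
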